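(* Let $\varphi_1$ and $\varphi_2$ be two $\mathbb{T}$-gains on a connected graph $G$ with $n$ vertices and $m$ edges. If $\varphi_1(\overrightarrow{C_k(T)})=\varphi_2(\overrightarrow{C_k(T)})$ for $k=1,\dots,m-n+1$ holds for one normal spanning tree $T$ of $G$, then the same equalities hold for the directed fundamental cycles of any normal spanning tree of $G$.
   Context: Graphs are finite, simple and undirected. $\mathbb{T}=\{z\in\mathbb{C}:|z|=1\}$. Each edge $e_{st}$ of $G$ gives two oriented edges $\overrightarrow{e_{st}}$ and $\overrightarrow{e_{ts}}$. A $\mathbb{T}$-gain on $G$ is a map $\varphi$ from oriented edges to $\mathbb{T}$ with $\varphi(\overrightarrow{e_{ts}})=\varphi(\overrightarrow{e_{st}})^{-1}$. The gain of a directed cycle is the product of the gains of its oriented edges. A rooted spanning tree $T$ with root $v_r$ induces the tree order: $v_x\le v_y$ iff $v_x$ lies on the path in $T$ from $v_r$ to $v_y$; $T$ is a normal spanning tree if any two adjacent vertices of $G$ are comparable. The suitably oriented graph $\overrightarrow{G_T}$ orients each edge $e_{st}$ with $v_s\le v_t$ as $\overrightarrow{e_{st}}$ if $e_{st}\in E(T)$ and as $\overrightarrow{e_{ts}}$ otherwise. Each of the $m-n+1$ non-tree edges creates a unique (fundamental) cycle with $T$, which is a directed cycle $\overrightarrow{C_k(T)}$ in $\overrightarrow{G_T}$ (directed fundamental cycles). *)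

theory Defs
  imports Complex_Main
begin

definition simple_graph :: "'a set \<Rightarrow> 'a set set \<Rightarrow> bool" where
  "simple_graph V E \<longleftrightarrow> finite V \<and> (\<forall>e\<in>E. \<exists>x y. e = {x, y} \<and> x \<in> V \<and> y \<in> V \<and> x \<noteq> y)"

definition is_path :: "'a set set \<Rightarrow> 'a list \<Rightarrow> 'a \<Rightarrow> 'a \<Rightarrow> bool" where
  "is_path F p x y \<longleftrightarrow> p \<noteq> [] \<and> hd p = x \<and> last p = y \<and> distinct p
     \<and> successively (\<lambda>u v. {u, v} \<in> F) p"

definition connected_graph :: "'a set \<Rightarrow> 'a set set \<Rightarrow> bool" where
  "connected_graph V F \<longleftrightarrow> (\<forall>x\<in>V. \<forall>y\<in>V. \<exists>p. is_path F p x y)"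

definition acyclic_edges :: "'a set set \<Rightarrow> bool" where
  "acyclic_edges F \<longleftrightarrow> \<not> (\<exists>c. length c \<ge> 3 \<and> distinct c \<and>
       successively (\<lambda>u v. {u, v} \<in> F) c \<and> {last c, hd c} \<in> F)"

definition spanning_tree :: "'a set \<Rightarrow> 'a set set \<Rightarrow> 'a set set \<Rightarrow> bool" where
  "spanning_tree V E T \<longleftrightarrow> T \<subseteq> E \<and> connected_graph V T \<and> acyclic_edges T"

definition tree_le :: "'a set set \<Rightarrow> 'a \<Rightarrow> 'a \<Rightarrow> 'a \<Rightarrow> bool" where
  "tree_le T r x y \<longleftrightarrow> (\<exists>p. is_path T p r y \<and> x \<in> set p)"

definition normal_spanning_tree :: "'a set \<Rightarrow> 'a set set \<Rightarrow> 'a set set \<Rightarrow> 'a \<Rightarrow> bool" where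
  "normal_spanning_tree V E T r \<longleftrightarrow> r \<in> V \<and> spanning_tree V E T \<and>
     (\<forall>s t. {s, t} \<in> E \<longrightarrow> tree_le T r s t \<or> tree_le T r t s)"

(* T-gain: phi s t is the gain of the oriented edge e_st *)
definition T_gain :: "'a set set \<Rightarrow> ('a \<Rightarrow> 'a \<Rightarrow> complex) \<Rightarrow> bool" where
  "T_gain E \<phi> \<longleftrightarrow> (\<forall>s t. {s, t} \<in> E \<longrightarrow> cmod (\<phi> s t) = 1 \<and> \<phi> t s = inverse (\<phi> s t))"

fun walk_gain :: "('a \<Rightarrow> 'a \<Rightarrow> complex) \<Rightarrow> 'a list \<Rightarrow> complex" where
  "walk_gain \<phi> (x # y # xs) = \<phi> x y * walk_gain \<phi> (y # xs)"
| "walk_gain \<phi> _ = 1"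

(* directed fundamental cycle of the non-tree edge {s,t} with s \<le> t in the tree order:
   the tree path from s down to t (tree edges oriented from smaller to larger),
   closed by the oriented non-tree edge e_ts *)
definition fund_cycle :: "'a set set \<Rightarrow> 'a \<Rightarrow> 'a \<Rightarrow> 'a list" where
  "fund_cycle T s t = (THE p. is_path T p s t) @ [s]"

definition fund_cycle_gain :: "('a \<Rightarrow> 'a \<Rightarrow> complex) \<Rightarrow> 'a set set \<Rightarrow> 'a \<Rightarrow> 'a \<Rightarrow> complex" where
  "fund_cycle_gain \<phi> T s t = walk_gain \<phi> (fund_cycle T s t)"

end

theory Submission imports Defs begin

lemma diverge:
  assumes ac: "acyclic_edges F" and p: "is_path F (x#u#p2) x y" and q: "is_path F (x#v#q2) x y"
    and uv: "u \<noteq> v"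
  shows False
proof -
  define p1 where "p1 = u#p2"
  define q1 where "q1 = v#q2"
  have yp: "y \<in> set p1" using p unfolding is_path_def p1_def by (metis last_ConsR last_in_set list.distinct(1))
  have yq: "y \<in> set q1" using q unfolding is_path_def q1_def by (metis last_ConsR last_in_set list.distinct(1))
  obtain \<alpha> z \<beta> where p1s: "p1 = \<alpha> @ z # \<beta>" and zq: "z \<in> set q1" and al: "\<forall>w\<in>set \<alpha>. w \<notin> set q1"
    using split_list_first_prop[of p1 "\<lambda>w. w \<in> set q1"] yp yq by blast
  obtain \<gamma> \<delta> where q1s: "q1 = \<gamma> @ z # \<delta>" using zq split_list by metis
  have dp: "distinct (x # \<alpha> @ z # \<beta>)" using p p1s unfolding is_path_def p1_def by simp
  have dq: "distinct (x # \<gamma> @ z # \<delta>)" using q q1s unfolding is_path_def q1_def by simp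
  have sp: "successively (\<lambda>a b. {a, b} \<in> F) (x # \<alpha> @ z # \<beta>)" using p p1s unfolding is_path_def p1_def by simp
  have sq: "successively (\<lambda>a b. {a, b} \<in> F) (x # \<gamma> @ z # \<delta>)" using q q1s unfolding is_path_def q1_def by simp
  have xv: "{x, v} \<in> F" using q unfolding is_path_def by simp
  define c where "c = (x # \<alpha> @ [z]) @ rev \<gamma>"
  have "distinct c" using dp dq al q1s unfolding c_def by auto
  moreover have "length c \<ge> 3"
  proof (cases "\<alpha> = [] \<and> \<gamma> = []")
    case True
    then show ?thesis using p1s q1s uv unfolding p1_def q1_def by simp
  next
    case False
    then show ?thesis unfolding c_def by (auto simp: Suc_le_eq)
  qed
  moreover have s1: "successively (\<lambda>a b. {a, b} \<in> F) (x # \<alpha> @ [z])"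
  proof -
    have "successively (\<lambda>a b. {a, b} \<in> F) ((x # \<alpha> @ [z]) @ \<beta>)" using sp by simp
    then show ?thesis unfolding successively_append_iff by blast
  qed
  have s2: "successively (\<lambda>a b. {a, b} \<in> F) \<gamma>"
  proof -
    have "successively (\<lambda>a b. {a, b} \<in> F) ((x # \<gamma>) @ (z # \<delta>))" using sq by simp
    then show ?thesis unfolding successively_append_iff by (cases \<gamma>) auto
  qed
  have s3: "\<gamma> \<noteq> [] \<Longrightarrow> {last \<gamma>, z} \<in> F"
  proof -
    assume "\<gamma> \<noteq> []"
    have "successively (\<lambda>a b. {a, b} \<in> F) ((x # \<gamma>) @ (z # \<delta>))" using sq by simp
    then show ?thesis unfolding successively_append_iff using \<open>\<gamma> \<noteq> []\<close> by auto
  qed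
  have "successively (\<lambda>a b. {a, b} \<in> F) c"
    unfolding c_def successively_append_iff using s1 s2 s3
    by (auto simp: insert_commute hd_rev)
  moreover have "{last c, hd c} \<in> F"
  proof (cases "\<gamma> = []")
    case True
    then have "z = v" using q1s q1_def by simp
    then show ?thesis using True xv unfolding c_def by (simp add: insert_commute)
  next
    case False
    then have "hd \<gamma> = v" using q1s q1_def by (cases \<gamma>) auto
    then show ?thesis using False xv unfolding c_def by (simp add: insert_commute last_rev)
  qed
  ultimately show False using ac unfolding acyclic_edges_def by blast
qed

lemma path_unique_aux:
  "acyclic_edges F \<Longrightarrow> is_path F (x#p1) x y \<Longrightarrow> is_path F (x#q1) x y \<Longrightarrow> p1 = q1"
proof (induction p1 arbitrary: x q1)
  case Nil
  then show ?case unfolding is_path_def by (cases q1) (auto, metis last_in_set list.distinct(1))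
next
  case (Cons u p2)
  show ?case
  proof (cases q1)
    case Nil
    then show ?thesis using Cons.prems unfolding is_path_def
      by (metis distinct.simps(2) last.simps last_in_set list.distinct(1) list.sel(1))
  next
    case (Cons v q2)
    show ?thesis
    proof (cases "u = v")
      case True
      have "is_path F (u#p2) u y" using Cons.prems(2) unfolding is_path_def by auto
      moreover have "is_path F (u#q2) u y" using Cons.prems(3) True Cons unfolding is_path_def by auto
      ultimately show ?thesis using Cons.IH Cons.prems(1) Cons True by blast
    next
      case False
      then show ?thesis using diverge Cons.prems Cons by metis
    qed
  qed
qed

lemma path_unique:
  assumes "acyclic_edges F" "is_path F p x y" "is_path F q x y" shows "p = q"
proof -
  obtain p1 where "p = x # p1" using assms(2) unfolding is_path_def by (cases p) auto
  moreover obtain q1 where "q = x # q1" using assms(3) unfolding is_path_def by (cases q) auto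
  ultimately show ?thesis using path_unique_aux assms by metis
qed


lemma path_the:
  assumes "acyclic_edges F" "is_path F p x y" shows "(THE p. is_path F p x y) = p"
  using assms path_unique by (metis the_equality)

lemma wg_append: "walk_gain f (xs @ [x]) * walk_gain f (x # ys) = walk_gain f (xs @ x # ys)"
proof (induction xs)
  case Nil then show ?case by simp
next
  case (Cons a xs) then show ?case by (cases xs) (simp_all add: mult.assoc)
qed

lemma wg_div: "walk_gain (\<lambda>a b. f a b / g a b) w = walk_gain f w / walk_gain g w"
  by (induction f w rule: walk_gain.induct) auto

lemma wg_norm:
  assumes "\<forall>s t. {s, t} \<in> E \<longrightarrow> cmod (f s t) = 1"
  shows "successively (\<lambda>u v. {u, v} \<in> E) w \<Longrightarrow> cmod (walk_gain f w) = 1"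
  by (induction w rule: induct_list012) (auto simp: norm_mult assms)

lemma wg_tele:
  assumes "\<forall>x y. {x, y} \<in> E \<longrightarrow> h y = h x * f x y"
  shows "successively (\<lambda>u v. {u, v} \<in> E) w \<Longrightarrow> w \<noteq> [] \<Longrightarrow> walk_gain f w * h (hd w) = h (last w)"
proof (induction w rule: induct_list012)
  case (3 x y xs)
  then have "walk_gain f (y # xs) * h y = h (last (y#xs))" by simp
  moreover have "h y = h x * f x y" using assms 3 by simp
  ultimately show ?case by (simp add: algebra_simps)
qed auto


lemma path_split:
  assumes "is_path F (a @ x # b) u w"
  shows "is_path F (a @ [x]) u x \<and> is_path F (x # b) x w"
proof -
  have s: "successively (\<lambda>a b. {a, b} \<in> F) ((a @ [x]) @ b)"
    and s2: "successively (\<lambda>a b. {a, b} \<in> F) (a @ (x # b))"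
    using assms unfolding is_path_def by auto
  then show ?thesis using assms unfolding is_path_def successively_append_iff
    by (cases a) auto
qed

lemma path_succ:
  assumes "is_path T p x y" "T \<subseteq> E" shows "successively (\<lambda>u v. {u, v} \<in> E) p"
proof -
  have "successively (\<lambda>u v. {u, v} \<in> T) p" using assms unfolding is_path_def by auto
  then show ?thesis using assms(2) by (induction p rule: induct_list012) auto
qed

theorem corollary3p1:
  fixes V :: "'a set" and E T T' :: "'a set set" and r r' :: 'a
    and \<phi>1 \<phi>2 :: "'a \<Rightarrow> 'a \<Rightarrow> complex"
  assumes "simple_graph V E" and "connected_graph V E"
    and "T_gain E \<phi>1" and "T_gain E \<phi>2"
    and "normal_spanning_tree V E T r"
    and "\<forall>s t. {s, t} \<in> E - T \<and> tree_le T r s t \<longrightarrow>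
           fund_cycle_gain \<phi>1 T s t = fund_cycle_gain \<phi>2 T s t"
    and "normal_spanning_tree V E T' r'"
  shows "\<forall>s t. {s, t} \<in> E - T' \<and> tree_le T' r' s t \<longrightarrow>
           fund_cycle_gain \<phi>1 T' s t = fund_cycle_gain \<phi>2 T' s t"
proof -
  define \<psi> where "\<psi> a b = \<phi>1 a b / \<phi>2 a b" for a b
  define P where "P a b = (THE p. is_path T p a b)" for a b
  define f where "f v = walk_gain \<psi> (P r v)" for v
  have ntT: "r \<in> V" "T \<subseteq> E" "connected_graph V T" "acyclic_edges T"
    "\<forall>s t. {s, t} \<in> E \<longrightarrow> tree_le T r s t \<or> tree_le T r t s"
    using assms(5) unfolding normal_spanning_tree_def spanning_tree_def by auto
  have ntT': "T' \<subseteq> E" "connected_graph V T'" "acyclic_edges T'"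
    using assms(7) unfolding normal_spanning_tree_def spanning_tree_def by auto
  have gpsi: "cmod (\<psi> s t) = 1 \<and> \<psi> t s = inverse (\<psi> s t)" if "{s, t} \<in> E" for s t
  proof -
    have a: "cmod (\<phi>1 s t) = 1" "\<phi>1 t s = inverse (\<phi>1 s t)" "cmod (\<phi>2 s t) = 1" "\<phi>2 t s = inverse (\<phi>2 s t)"
      using assms(3,4) that unfolding T_gain_def by auto
    have "cmod (\<psi> s t) = 1" unfolding \<psi>_def using a by (simp add: norm_divide)
    moreover have "\<psi> t s = inverse (\<psi> s t)" unfolding \<psi>_def using a by (simp add: divide_inverse mult.commute)
    ultimately show ?thesis by blast
  qed
  have gpsi1: "\<forall>s t. {s, t} \<in> E \<longrightarrow> cmod (\<psi> s t) = 1" using gpsi by blast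
  have g2: "\<forall>s t. {s, t} \<in> E \<longrightarrow> cmod (\<phi>2 s t) = 1" using assms(4) unfolding T_gain_def by blast
  have Vmem: "x \<in> V \<and> y \<in> V \<and> x \<noteq> y" if "{x, y} \<in> E" for x y
  proof -
    have "\<exists>a b. {x, y} = {a, b} \<and> a \<in> V \<and> b \<in> V \<and> a \<noteq> b"
      using bspec[OF conjunct2[OF assms(1)[unfolded simple_graph_def]] that] .
    then obtain a b where "{x, y} = {a, b}" "a \<in> V" "b \<in> V" "a \<noteq> b" by (elim exE conjE)
    then show ?thesis unfolding doubleton_eq_iff by blast
  qed
  have Pp: "is_path T (P x y) x y" if "x \<in> V" "y \<in> V" for x y
  proof -
    have "\<exists>p. is_path T p x y" using ntT(3) that unfolding connected_graph_def by simp
    then obtain p where "is_path T p x y" by (elim exE)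
    then show ?thesis unfolding P_def using path_the[OF ntT(4)] by metis
  qed
  have fnz: "f x \<noteq> 0" if "x \<in> V" for x
  proof -
    have "cmod (f x) = 1" unfolding f_def
      using wg_norm[OF gpsi1 path_succ[OF Pp[OF ntT(1) that] ntT(2)]] .
    then show ?thesis by auto
  qed
  have key: "f y = f x * \<psi> x y" if e: "{x, y} \<in> E" and le: "tree_le T r x y" for x y
  proof -
    have xV: "x \<in> V" and yV: "y \<in> V" and xy: "x \<noteq> y" using Vmem[OF e] by auto
    obtain p where p: "is_path T p r y" and xp: "x \<in> set p" using le unfolding tree_le_def by auto
    obtain a b where ab: "p = a @ x # b" using xp split_list by metis
    have ps: "is_path T (a @ [x]) r x" "is_path T (x # b) x y" using path_split[of T a x b r y] p ab by auto
    have "P r y = a @ x # b" using path_the[OF ntT(4) p] ab unfolding P_def by simp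
    moreover have "P r x = a @ [x]" using path_the[OF ntT(4) ps(1)] unfolding P_def by simp
    moreover have "P x y = x # b" using path_the[OF ntT(4) ps(2)] unfolding P_def by simp
    ultimately have fy: "f y = f x * walk_gain \<psi> (P x y)" unfolding f_def by (simp add: wg_append)
    have "walk_gain \<psi> (P x y) = \<psi> x y"
    proof (cases "{x, y} \<in> T")
      case True
      have "is_path T [x, y] x y" using True xy unfolding is_path_def by simp
      then have "P x y = [x, y]" unfolding P_def using path_the[OF ntT(4)] by blast
      then show ?thesis by simp
    next
      case False
      have "fund_cycle_gain \<phi>1 T x y = fund_cycle_gain \<phi>2 T x y" using assms(6) e False le by blast
      then have h: "walk_gain \<phi>1 (P x y @ [x]) = walk_gain \<phi>2 (P x y @ [x])"
        unfolding fund_cycle_gain_def fund_cycle_def P_def .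
      have sc: "successively (\<lambda>u v. {u, v} \<in> E) (P x y @ [x])"
        using path_succ[OF Pp[OF xV yV] ntT(2)] Pp[OF xV yV] e
        unfolding successively_append_iff is_path_def by (auto simp: insert_commute)
      have "cmod (walk_gain \<phi>2 (P x y @ [x])) = 1" using wg_norm[OF g2 sc] .
      then have "walk_gain \<psi> (P x y @ [x]) = 1" using h unfolding \<psi>_def wg_div by auto
      moreover obtain c where c: "P x y = c @ [y]" using Pp[OF xV yV] unfolding is_path_def
        by (metis append_butlast_last_id)
      ultimately have "walk_gain \<psi> (P x y) * \<psi> y x = 1"
        using wg_append[of \<psi> c y "[x]"] by simp
      moreover have "\<psi> y x = inverse (\<psi> x y)" "\<psi> x y \<noteq> 0" using gpsi[OF e] by auto
      ultimately show ?thesis by (simp add: field_simps)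
    qed
    then show ?thesis using fy by simp
  qed
  have edge: "\<forall>x y. {x, y} \<in> E \<longrightarrow> f y = f x * \<psi> x y"
  proof (intro allI impI)
    fix x y assume e: "{x, y} \<in> E"
    show "f y = f x * \<psi> x y"
    proof (cases "tree_le T r x y")
      case True then show ?thesis using key e by blast
    next
      case False
      then have "tree_le T r y x" using ntT(5) e by blast
      moreover have e': "{y, x} \<in> E" using e by (simp add: insert_commute)
      ultimately have "f x = f y * \<psi> y x" using key by blast
      moreover have "\<psi> y x = inverse (\<psi> x y)" "\<psi> x y \<noteq> 0" using gpsi[OF e] by auto
      ultimately show ?thesis by (simp add: field_simps)
    qed
  qed
  show ?thesis
  proof (intro allI impI)
    fix s t assume st: "{s, t} \<in> E - T' \<and> tree_le T' r' s t"
    then have e: "{s, t} \<in> E" by blast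
    have sV: "s \<in> V" and tV: "t \<in> V" using Vmem[OF e] by auto
    obtain p where p: "is_path T' p s t" using ntT'(2) sV tV unfolding connected_graph_def by blast
    then have pe: "(THE p. is_path T' p s t) = p" using path_the[OF ntT'(3)] by metis
    have sc: "successively (\<lambda>u v. {u, v} \<in> E) (p @ [s])"
      using path_succ[OF p ntT'(1)] p e
      unfolding successively_append_iff is_path_def by (auto simp: insert_commute)
    have hd: "hd (p @ [s]) = s" using p unfolding is_path_def by (cases p) auto
    have "walk_gain \<psi> (p @ [s]) * f s = f s" using wg_tele[OF edge sc] hd by simp
    then have w1: "walk_gain \<psi> (p @ [s]) = 1" using fnz[OF sV] by simp
    have "walk_gain \<phi>1 (p @ [s]) = walk_gain \<phi>2 (p @ [s])"
    proof (cases "walk_gain \<phi>2 (p @ [s]) = 0")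
      case True then show ?thesis using w1 unfolding \<psi>_def wg_div by simp
    next
      case False then show ?thesis using w1 unfolding \<psi>_def wg_div by (simp add: field_simps)
    qed
    then show "fund_cycle_gain \<phi>1 T' s t = fund_cycle_gain \<phi>2 T' s t"
      unfolding fund_cycle_gain_def fund_cycle_def pe .
  qed
qed

end
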